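(* Let $\mathcal{H}$ be a real Hilbert space, let $A_1, A_2:\mathcal{H}\to 2^{\mathcal{H}}$ be maximally monotone, let $B:\mathcal{H}\to\mathcal{H}$ be monotone and $L$-Lipschitz continuous ($L>0$), let $C:\mathcal{H}\to\mathcal{H}$ be $\beta$-cocoercive ($\beta>0$), and let $\gamma>0$. Let $z_0, y_0, y_{-1}\in\mathcal{H}$ and define sequences $\{x_n\},\{y_n\},\{z_n\}$ for $n\ge 0$ by $$x_{n+1}=J_{\gamma A_1}z_n,\qquad y_{n+1}=J_{\gamma A_2}\big(2x_{n+1}-z_n-2\gamma By_n+\gamma By_{n-1}-\gamma Cy_n\big),\qquad z_{n+1}=z_n+y_{n+1}-x_{n+1}.$$ Suppose that there exist $x,z\in\mathcal{H}$ such that $z-x\in\gamma A_1x$ and $x-z\in\gamma(A_2+B+C)x$. Then for all $n\in\mathbb{N}$, $$\|z_{n+1}-z\|^2+2\gamma\langle By_{n+1}-By_n,x-y_{n+1}\rangle+\|z_{n+1}-z_n\|^2 \le \|z_n-z\|^2+2\gamma\langle By_n-By_{n-1},x-y_n\rangle+2\gamma\langle By_n-By_{n-1},y_n-y_{n+1}\rangle+2\gamma\langle Cy_n-Cx,x-y_{n+1}\rangle.$$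
   Context: For a maximally monotone operator $A$ and $\gamma>0$, $J_{\gamma A}=(\mathrm{Id}+\gamma A)^{-1}$ is the resolvent (single-valued, defined on all of $\mathcal{H}$). An operator $C$ is $\beta$-cocoercive if $\langle x-y,Cx-Cy\rangle\ge\beta\|Cx-Cy\|^2$ for all $x,y$. *)

theory Defs
  imports "HOL-Analysis.Analysis"
begin

definition monotone_op :: "('a::real_inner \<Rightarrow> 'a set) \<Rightarrow> bool" where
  "monotone_op A \<longleftrightarrow> (\<forall>x y u v. u \<in> A x \<longrightarrow> v \<in> A y \<longrightarrow> inner (x - y) (u - v) \<ge> 0)"

definition maximally_monotone :: "('a::real_inner \<Rightarrow> 'a set) \<Rightarrow> bool" where
  "maximally_monotone A \<longleftrightarrow> monotone_op A \<and>
     (\<forall>x u. (\<forall>y v. v \<in> A y \<longrightarrow> inner (x - y) (u - v) \<ge> 0) \<longrightarrow> u \<in> A x)"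

text \<open>Resolvent J_{gamma A} = (Id + gamma A)^{-1}: the (unique, for maximally monotone A)
  point p with x in p + gamma A p.\<close>
definition resolvent :: "real \<Rightarrow> ('a::real_inner \<Rightarrow> 'a set) \<Rightarrow> 'a \<Rightarrow> 'a" where
  "resolvent \<gamma> A x = (THE p. x - p \<in> (\<lambda>u. \<gamma> *\<^sub>R u) ` A p)"

definition monotone_single :: "('a::real_inner \<Rightarrow> 'a) \<Rightarrow> bool" where
  "monotone_single B \<longleftrightarrow> (\<forall>x y. inner (x - y) (B x - B y) \<ge> 0)"

definition lipschitz_op :: "real \<Rightarrow> ('a::real_normed_vector \<Rightarrow> 'a) \<Rightarrow> bool" where
  "lipschitz_op L B \<longleftrightarrow> (\<forall>x y. norm (B x - B y) \<le> L * norm (x - y))"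

definition cocoercive :: "real \<Rightarrow> ('a::real_inner \<Rightarrow> 'a) \<Rightarrow> bool" where
  "cocoercive \<beta> C \<longleftrightarrow> (\<forall>x y. inner (x - y) (C x - C y) \<ge> \<beta> * (norm (C x - C y))\<^sup>2)"

end

theory Submission
  imports Defs
begin

lemma weights_of_hull:
  fixes g :: "'i \<Rightarrow> 'a::real_vector"
  assumes "finite I" "p \<in> convex hull (g ` I)"
  shows "\<exists>l. (\<forall>i\<in>I. 0 \<le> l i) \<and> sum l I = 1 \<and> p = (\<Sum>i\<in>I. l i *\<^sub>R g i)"
proof -
  define T where "T = {q. \<exists>l. (\<forall>i\<in>I. 0 \<le> l i) \<and> sum l I = 1 \<and> q = (\<Sum>i\<in>I. l i *\<^sub>R g i)}"
  have "convex T"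
  proof (rule convexI)
    fix a b and u v :: real
    assume a: "a \<in> T" and b: "b \<in> T" and uv0: "0 \<le> u" "0 \<le> v" "u + v = 1"
    then have uv: "0 \<le> u \<and> 0 \<le> v \<and> u + v = 1" by simp
    obtain l1 where l1: "\<forall>i\<in>I. 0 \<le> l1 i" "sum l1 I = 1" "a = (\<Sum>i\<in>I. l1 i *\<^sub>R g i)"
      using a unfolding T_def by blast
    obtain l2 where l2: "\<forall>i\<in>I. 0 \<le> l2 i" "sum l2 I = 1" "b = (\<Sum>i\<in>I. l2 i *\<^sub>R g i)"
      using b unfolding T_def by blast
    show "u *\<^sub>R a + v *\<^sub>R b \<in> T"
      unfolding T_def
    proof (intro CollectI exI[of _ "\<lambda>i. u * l1 i + v * l2 i"] conjI)
      show "\<forall>i\<in>I. 0 \<le> u * l1 i + v * l2 i" using l1 l2 uv by auto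
      show "(\<Sum>i\<in>I. u * l1 i + v * l2 i) = 1"
        using l1 l2 uv by (simp add: sum.distrib sum_distrib_left[symmetric])
      show "u *\<^sub>R a + v *\<^sub>R b = (\<Sum>i\<in>I. (u * l1 i + v * l2 i) *\<^sub>R g i)"
        using l1 l2 by (simp add: scaleR_add_left sum.distrib scaleR_sum_right)
    qed
  qed
  moreover have "g ` I \<subseteq> T"
  proof
    fix x assume "x \<in> g ` I"
    then obtain i where i: "i \<in> I" "x = g i" by auto
    show "x \<in> T" unfolding T_def
      apply (rule CollectI, rule exI[of _ "\<lambda>j. if j = i then 1 else 0"])
    proof (intro conjI)
      have "(\<Sum>j\<in>I. (if j = i then 1 else 0) *\<^sub>R g j) = (\<Sum>j\<in>I. if j = i then g j else 0)"
        by (rule sum.cong) auto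
      then show "x = (\<Sum>j\<in>I. (if j = i then 1 else 0) *\<^sub>R g j)"
        using i assms(1) by (simp add: sum.delta')
    qed (use i assms(1) in auto)
  qed
  ultimately have "convex hull (g ` I) \<subseteq> T" by (rule hull_minimal[rotated])
  then show ?thesis using assms(2) unfolding T_def by blast
qed

lemma comb_nonpos:
  fixes y c :: "'i \<Rightarrow> 'a::real_inner"
  assumes fin: "finite J" and l0: "\<forall>i\<in>J. 0 \<le> l i" and l1: "sum l J = 1"
    and mono: "\<And>i j. i\<in>J \<Longrightarrow> j\<in>J \<Longrightarrow> inner (y i - y j) (c i - c j) \<le> 0"
    and p: "p = (\<Sum>i\<in>J. l i *\<^sub>R ((1/2) *\<^sub>R (y i + c i)))"
    and s: "\<forall>i\<in>J. inner (p - y i) (p - c i) = s"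
  shows "s \<le> 0"
proof -
  define Y where "Y = (\<Sum>i\<in>J. l i *\<^sub>R y i)"
  define Cb where "Cb = (\<Sum>i\<in>J. l i *\<^sub>R c i)"
  define T where "T = (\<Sum>i\<in>J. l i * inner (y i) (c i))"
  have pY: "p = (1/2) *\<^sub>R (Y + Cb)"
    unfolding p Y_def Cb_def by (simp add: scaleR_sum_right sum.distrib scaleR_add_right)
  have s1: "s = (\<Sum>i\<in>J. l i * inner (p - y i) (p - c i))"
    using s l1 by (simp add: sum_distrib_right[symmetric])
  have ex: "\<And>i. inner (p - y i) (p - c i) = inner p p - inner p (c i) - inner (y i) p + inner (y i) (c i)"
    by (simp add: inner_diff_left inner_diff_right)
  have s2: "s = inner p p - inner p Cb - inner Y p + T"
    unfolding s1 ex Y_def Cb_def T_def using l1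
    by (simp add: algebra_simps sum.distrib sum_subtractf inner_sum_left inner_sum_right
        sum_distrib_right[symmetric] sum_distrib_left)
  have per: "inner (y i) (c i) - inner (y i) Cb - inner Y (c i) + T \<le> 0" if i: "i \<in> J" for i
  proof -
    have "(\<Sum>j\<in>J. l j * inner (y i - y j) (c i - c j)) \<le> 0"
      using l0 mono[OF i] by (intro sum_nonpos) (simp add: mult_nonneg_nonpos)
    moreover have "(\<Sum>j\<in>J. l j * inner (y i - y j) (c i - c j))
        = inner (y i) (c i) - inner (y i) Cb - inner Y (c i) + T"
      unfolding Y_def Cb_def T_def using l1
      by (simp add: inner_diff_left inner_diff_right algebra_simps sum.distrib sum_subtractf
          inner_sum_left inner_sum_right sum_distrib_right[symmetric] sum_distrib_left)
    ultimately show ?thesis by simp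
  qed
  have "(\<Sum>i\<in>J. l i * (inner (y i) (c i) - inner (y i) Cb - inner Y (c i) + T)) \<le> 0"
    using l0 per by (intro sum_nonpos) (simp add: mult_nonneg_nonpos)
  moreover have "(\<Sum>i\<in>J. l i * (inner (y i) (c i) - inner (y i) Cb - inner Y (c i) + T))
      = T - (\<Sum>i\<in>J. l i * inner (y i) Cb) - (\<Sum>i\<in>J. l i * inner Y (c i)) + (\<Sum>i\<in>J. l i) * T"
    unfolding T_def by (simp add: algebra_simps sum.distrib sum_subtractf sum_distrib_right)
  moreover have "(\<Sum>i\<in>J. l i * inner (y i) Cb) = inner Y Cb"
    unfolding Y_def by (simp add: inner_sum_left)
  moreover have "(\<Sum>i\<in>J. l i * inner Y (c i)) = inner Y Cb"
    unfolding Cb_def by (simp add: inner_sum_right)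
  ultimately have TY: "T \<le> inner Y Cb" using l1 by simp
  have "s = T - inner Y Cb - (1/4) * inner (Y - Cb) (Y - Cb)"
    unfolding s2 pY by (simp add: inner_add_left inner_add_right inner_diff_left inner_diff_right
        inner_commute algebra_simps)
  then show ?thesis using TY inner_ge_zero[of "Y - Cb"] by linarith
qed


lemma cont_Max:
  fixes f :: "'i \<Rightarrow> 'a::topological_space \<Rightarrow> real"
  assumes "finite I" "I \<noteq> {}" "\<forall>i\<in>I. continuous_on UNIV (f i)"
  shows "continuous_on UNIV (\<lambda>p. Max ((\<lambda>i. f i p) ` I))"
  using assms
proof (induction I rule: finite_ne_induct)
  case (singleton x)
  then show ?case by simp
next
  case (insert x F)
  have "(\<lambda>p. Max ((\<lambda>i. f i p) ` insert x F)) = (\<lambda>p. max (f x p) (Max ((\<lambda>i. f i p) ` F)))"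
    using insert by (simp add: Max_insert)
  then show ?case using insert by (simp add: continuous_on_max)
qed

lemma norm_sq_expand:
  fixes u v :: "'a::real_inner"
  shows "(norm (u - t *\<^sub>R v))\<^sup>2 = (norm u)\<^sup>2 - 2 * t * inner u v + t * t * inner v v"
  unfolding power2_norm_eq_inner
  by (simp add: inner_diff_left inner_diff_right inner_commute[of v u] algebra_simps)

lemma inner_shift_expand:
  fixes a b v :: "'a::real_inner"
  shows "inner (a + t *\<^sub>R v) (b + t *\<^sub>R v) = inner a b + t * (inner v a + inner v b) + t * t * inner v v"
  by (simp add: inner_add_left inner_add_right inner_commute[of a v] algebra_simps)

lemma var_ineq:
  fixes K :: "'a::real_inner set"
  assumes "convex K" "q \<in> K" "\<forall>x\<in>K. norm (p - q) \<le> norm (p - x)" "x \<in> K"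
  shows "inner (p - q) (x - q) \<le> 0"
proof (rule ccontr)
  assume "\<not> ?thesis"
  then have a: "inner (p - q) (x - q) > 0" by simp
  define a where "a = inner (p - q) (x - q)"
  define b where "b = inner (x - q) (x - q)"
  have "x \<noteq> q" using a by auto
  then have b0: "b > 0" unfolding b_def by simp
  define t where "t = min 1 (a / b)"
  have t0: "t > 0" using a b0 unfolding t_def a_def by simp
  have t1: "t \<le> 1" unfolding t_def by simp
  have tb: "t * b \<le> a" unfolding t_def using b0
    by (metis min.cobounded2 mult.commute pos_le_divide_eq)
  have "(1 - t) *\<^sub>R q + t *\<^sub>R x \<in> K"
    using assms(1,2,4) t0 t1 by (intro convexD) auto
  then have "norm (p - q) \<le> norm (p - ((1 - t) *\<^sub>R q + t *\<^sub>R x))" using assms(3) by blast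
  then have "(norm (p - q))\<^sup>2 \<le> (norm (p - ((1 - t) *\<^sub>R q + t *\<^sub>R x)))\<^sup>2"
    by (simp add: power_mono)
  moreover have "p - ((1 - t) *\<^sub>R q + t *\<^sub>R x) = (p - q) - t *\<^sub>R (x - q)"
    by (simp add: algebra_simps)
  moreover have "(norm ((p - q) - t *\<^sub>R (x - q)))\<^sup>2 = (norm (p - q))\<^sup>2 - 2 * t * a + t * t * b"
    unfolding a_def b_def by (rule norm_sq_expand)
  ultimately have "0 \<le> - 2 * t * a + t * t * b" by simp
  moreover have "t * (t * b) \<le> t * a" using tb t0 by (simp add: mult_left_mono)
  moreover have "t * a > 0" using t0 a unfolding a_def by simp
  moreover have "t * t * b = t * (t * b)" by simp
  ultimately show False by linarith
qed


lemma finite_minty: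
  fixes y c :: "'i \<Rightarrow> 'a::real_inner"
  assumes fin: "finite I" and ne: "I \<noteq> {}"
    and mono: "\<And>i j. i\<in>I \<Longrightarrow> j\<in>I \<Longrightarrow> inner (y i - y j) (c i - c j) \<le> 0"
  shows "\<exists>p. \<forall>i\<in>I. inner (p - y i) (c i - p) \<ge> 0"
proof -
  define m where "m i = (1/2) *\<^sub>R (y i + c i)" for i
  define f where "f i p = inner (p - y i) (p - c i)" for i p
  define \<phi> where "\<phi> p = Max ((\<lambda>i. f i p) ` I)" for p
  have fcont: "continuous_on UNIV (f i)" for i
    unfolding f_def by (intro continuous_intros)
  have cont: "continuous_on UNIV \<phi>"
    unfolding \<phi>_def using fin ne fcont by (intro cont_Max) auto
  define K where "K = convex hull (m ` I)"
  have Kc: "compact K" unfolding K_def using fin by (intro finite_imp_compact_convex_hull) auto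
  have Kne: "K \<noteq> {}" unfolding K_def using ne by simp
  have Kcv: "convex K" unfolding K_def by simp
  obtain ps where ps: "ps \<in> K" "\<forall>q\<in>K. \<phi> ps \<le> \<phi> q"
    using continuous_attains_inf[OF Kc Kne continuous_on_subset[OF cont]] by auto
  define s where "s = \<phi> ps"
  have fle: "f i ps \<le> s" if "i \<in> I" for i
    unfolding s_def \<phi>_def using fin that by (intro Max_ge) auto
  define J where "J = {i\<in>I. f i ps = s}"
  have Jfin: "finite J" unfolding J_def using fin by simp
  have Jne: "J \<noteq> {}"
  proof -
    have "s \<in> (\<lambda>i. f i ps) ` I" unfolding s_def \<phi>_def using fin ne by (intro Max_in) auto
    then show ?thesis unfolding J_def by auto
  qed
  have JI: "J \<subseteq> I" unfolding J_def by auto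
  have "ps \<in> convex hull (m ` J)"
  proof (rule ccontr)
    assume nin: "ps \<notin> convex hull (m ` J)"
    define KJ where "KJ = convex hull (m ` J)"
    have KJc: "compact KJ" unfolding KJ_def using Jfin by (intro finite_imp_compact_convex_hull) auto
    have KJne: "KJ \<noteq> {}" unfolding KJ_def using Jne by simp
    obtain q where q: "q \<in> KJ" "\<forall>x\<in>KJ. norm (ps - q) \<le> norm (ps - x)"
      using continuous_attains_inf[OF KJc KJne, of "\<lambda>x. norm (ps - x)"]
        continuous_on_norm[OF continuous_on_diff[OF continuous_on_const continuous_on_id]]
      by auto
    have var: "inner (ps - q) (x - q) \<le> 0" if "x \<in> KJ" for x
      using var_ineq[of KJ q ps x] q that unfolding KJ_def by auto
    have qK: "q \<in> K" using q(1) JI unfolding KJ_def K_def by (meson hull_mono image_mono subsetD)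
    define v where "v = q - ps"
    have vne: "v \<noteq> 0" using q(1) nin unfolding v_def KJ_def by auto
    define d2 where "d2 = inner v v"
    have d2pos: "d2 > 0" using vne unfolding d2_def by simp
    have fexp: "f i (ps + t *\<^sub>R v) = f i ps + 2 * t * inner v (ps - m i) + t * t * d2" for i t
    proof -
      have "f i (ps + t *\<^sub>R v) = inner ((ps - y i) + t *\<^sub>R v) ((ps - c i) + t *\<^sub>R v)"
        unfolding f_def by (simp add: algebra_simps)
      also have "\<dots> = f i ps + t * (inner v (ps - y i) + inner v (ps - c i)) + t * t * d2"
        unfolding inner_shift_expand f_def d2_def ..
      also have "inner v (ps - y i) + inner v (ps - c i) = 2 * inner v (ps - m i)"
        unfolding m_def by (simp add: inner_diff_right inner_add_right algebra_simps)
      finally show ?thesis by simp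
    qed
    have goodJ: "f i (ps + t *\<^sub>R v) < s" if i: "i \<in> J" and t: "0 < t" "t \<le> 1" for i t
    proof -
      have mi: "m i \<in> KJ" unfolding KJ_def using i by (simp add: hull_inc)
      have "inner v (ps - m i) = - d2 + inner (ps - q) (m i - q)"
        unfolding v_def d2_def by (simp add: inner_diff_left inner_diff_right algebra_simps)
      then have "inner v (ps - m i) \<le> - d2" using var[OF mi] by simp
      then have "2 * t * inner v (ps - m i) \<le> 2 * t * (- d2)" using t
        by (intro mult_left_mono) auto
      moreover have "t * t * d2 \<le> t * d2" using t d2pos by (simp add: mult_right_le_one_le)
      moreover have "t * d2 > 0" using t d2pos by simp
      moreover have "f i ps = s" using i unfolding J_def by simp
      ultimately show ?thesis unfolding fexp by linarith
    qed
    have evN: "eventually (\<lambda>t. \<forall>i\<in>I - J. f i (ps + t *\<^sub>R v) < s) (at_right (0::real))"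
    proof (rule eventually_ball_finite)
      show "finite (I - J)" using fin by simp
      show "\<forall>i\<in>I - J. \<forall>\<^sub>F t in at_right 0. f i (ps + t *\<^sub>R v) < s"
      proof
        fix i assume i: "i \<in> I - J"
        then have lt: "f i ps < s" using fle unfolding J_def by force
        have "((\<lambda>t. f i (ps + t *\<^sub>R v)) \<longlongrightarrow> f i (ps + 0 *\<^sub>R v)) (at_right 0)"
          unfolding f_def by (intro tendsto_intros)
        then have "((\<lambda>t. f i (ps + t *\<^sub>R v)) \<longlongrightarrow> f i ps) (at_right 0)" by simp
        then show "\<forall>\<^sub>F t in at_right 0. f i (ps + t *\<^sub>R v) < s"
          using lt by (rule order_tendstoD)
      qed
    qed
    have ev01: "eventually (\<lambda>t. 0 < t \<and> t \<le> (1::real)) (at_right 0)"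
      by (simp add: eventually_at_right_field) (intro exI[of _ 1], auto)
    obtain t where t: "0 < t" "t \<le> 1" "\<forall>i\<in>I - J. f i (ps + t *\<^sub>R v) < s"
      using eventually_happens'[OF trivial_limit_at_right_real[THEN not_sym[THEN not_sym]] eventually_conj[OF evN ev01]]
      by auto
    have allI': "\<forall>i\<in>I. f i (ps + t *\<^sub>R v) < s"
      using t goodJ by (metis DiffI)
    have "\<phi> (ps + t *\<^sub>R v) < s"
      unfolding \<phi>_def using fin ne allI' by (simp add: Max_less_iff)
    moreover have "ps + t *\<^sub>R v \<in> K"
    proof -
      have "(1 - t) *\<^sub>R ps + t *\<^sub>R q \<in> K" using Kcv ps(1) qK t by (intro convexD) auto
      moreover have "(1 - t) *\<^sub>R ps + t *\<^sub>R q = ps + t *\<^sub>R v" unfolding v_def by (simp add: algebra_simps)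
      ultimately show ?thesis by simp
    qed
    ultimately show False using ps(2) unfolding s_def by fastforce
  qed
  then obtain l where l: "\<forall>i\<in>J. 0 \<le> l i" "sum l J = 1" "ps = (\<Sum>i\<in>J. l i *\<^sub>R m i)"
    using weights_of_hull[OF Jfin] by blast
  have "s \<le> 0"
    apply (rule comb_nonpos[of J l y c ps s])
    using Jfin l mono JI unfolding m_def J_def f_def by auto
  then have "\<forall>i\<in>I. inner (ps - y i) (c i - ps) \<ge> 0"
    using fle unfolding f_def by (smt (verit) inner_diff_right inner_minus_right minus_diff_eq)
  then show ?thesis by blast
qed


lemma mid_bound:
  fixes x x' :: "'a::real_inner"
  assumes S: "convex S" "x \<in> S" "x' \<in> S" and low: "\<forall>z\<in>S. D \<le> (norm z)\<^sup>2"
    and b: "(norm x)\<^sup>2 \<le> D + e" "(norm x')\<^sup>2 \<le> D + e"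
  shows "(norm (x - x'))\<^sup>2 \<le> 4 * e"
proof -
  have "(1/2) *\<^sub>R x + (1/2) *\<^sub>R x' \<in> S" using S by (intro convexD) auto
  then have m: "D \<le> (norm ((1/2) *\<^sub>R x + (1/2) *\<^sub>R x'))\<^sup>2" using low by blast
  have par: "(norm (x - x'))\<^sup>2 = 2 * (norm x)\<^sup>2 + 2 * (norm x')\<^sup>2 - 4 * (norm ((1/2) *\<^sub>R x + (1/2) *\<^sub>R x'))\<^sup>2"
    unfolding power2_norm_eq_inner
    by (simp add: inner_add_left inner_add_right inner_diff_left inner_diff_right
        inner_commute[of x' x] algebra_simps)
  show ?thesis using m b unfolding par by linarith
qed

lemma fip_hilbert:
  fixes \<F> :: "'a::{real_inner,complete_space} set set"
  assumes cc: "\<forall>K\<in>\<F>. closed K \<and> convex K" and K0: "K0 \<in> \<F>" "bounded K0"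
    and fip: "\<And>G. finite G \<Longrightarrow> G \<subseteq> \<F> \<Longrightarrow> \<Inter>(insert K0 G) \<noteq> {}"
  shows "\<Inter>\<F> \<noteq> {}"
proof -
  define S where "S G = \<Inter>(insert K0 G)" for G
  define D where "D G = Inf ((\<lambda>x. (norm x)\<^sup>2) ` S G)" for G
  obtain R where R: "\<forall>x\<in>K0. norm x \<le> R" using K0(2) unfolding bounded_iff by blast
  let ?Fin = "{G. finite G \<and> G \<subseteq> \<F>}"
  have Sne: "S G \<noteq> {}" if "G \<in> ?Fin" for G using fip that unfolding S_def by auto
  have SK0: "S G \<subseteq> K0" for G unfolding S_def by auto
  have Sconv: "convex (S G)" if "G \<in> ?Fin" for G
    unfolding S_def using that cc K0 by (intro convex_Inter) auto
  have bddb: "bdd_below ((\<lambda>x. (norm x)\<^sup>2) ` S G)" for G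
    by (rule bdd_belowI[of _ 0]) auto
  have Dlow: "D G \<le> (norm x)\<^sup>2" if "x \<in> S G" for G x
    unfolding D_def using that bddb by (intro cInf_lower) auto
  have Dless: "\<exists>x\<in>S G. (norm x)\<^sup>2 < D G + e" if "G \<in> ?Fin" "e > 0" for G e
  proof -
    have "D G < D G + e" using that by simp
    moreover have "(\<lambda>x. (norm x)\<^sup>2) ` S G \<noteq> {}" using Sne[OF that(1)] by simp
    ultimately show ?thesis unfolding D_def using cInf_less_iff[OF _ bddb, of G "D G + e"]
      unfolding D_def by auto
  qed
  have DR: "D G \<le> R\<^sup>2" if GF: "G \<in> ?Fin" for G
  proof -
    obtain x where x: "x \<in> S G" using Sne[OF GF] by auto
    then have "norm x \<le> R" using R SK0 by auto
    then have "(norm x)\<^sup>2 \<le> R\<^sup>2" by (simp add: power_mono)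
    then show ?thesis using Dlow[OF x] by linarith
  qed
  have Dmono: "D G \<le> D G'" if "G \<subseteq> G'" "G' \<in> ?Fin" for G G'
  proof -
    have "S G' \<subseteq> S G" unfolding S_def using that(1) by auto
    then show ?thesis unfolding D_def using Sne[OF that(2)] bddb
      by (intro cInf_superset_mono) auto
  qed
  define \<delta> where "\<delta> = Sup (D ` ?Fin)"
  have Finne: "D ` ?Fin \<noteq> {}" by auto
  have bdda: "bdd_above (D ` ?Fin)" using DR by (intro bdd_aboveI[of _ "R\<^sup>2"]) auto
  have Dd: "D G \<le> \<delta>" if "G \<in> ?Fin" for G
    unfolding \<delta>_def using that bdda by (intro cSup_upper) auto
  have exG: "\<exists>G\<in>?Fin. \<delta> - e < D G" if "e > 0" for e
  proof -
    have "\<delta> - e < \<delta>" using that by simp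
    then show ?thesis unfolding \<delta>_def using less_cSup_iff[OF Finne bdda] by auto
  qed
  define eps where "eps n = inverse (real (Suc n))" for n :: nat
  have eps_pos: "eps n > 0" for n unfolding eps_def by simp
  have eps_anti: "eps n \<le> eps k" if "k \<le> n" for k n
    unfolding eps_def using that by (simp add: le_imp_inverse_le)
  define H where "H n = (SOME G. G \<in> ?Fin \<and> \<delta> - eps n < D G)" for n
  have H: "H n \<in> ?Fin \<and> \<delta> - eps n < D (H n)" for n
    unfolding H_def using exG[OF eps_pos[of n]] by (rule someI2_bex) auto
  define U where "U n = \<Union>(H ` {..n})" for n
  have UF: "U n \<in> ?Fin" for n unfolding U_def using H by auto
  have Umono: "U k \<subseteq> U n" if "k \<le> n" for k n unfolding U_def using that by (auto intro: le_trans)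
  have DU: "\<delta> - eps n < D (U n)" for n
  proof -
    have "H n \<subseteq> U n" unfolding U_def by auto
    then have "D (H n) \<le> D (U n)" by (rule Dmono[OF _ UF])
    then show ?thesis using H[of n] by linarith
  qed
  have approx: "\<exists>x\<in>S G. (norm x)\<^sup>2 < \<delta> + eps n" if GF: "G \<in> ?Fin" for G n
  proof -
    obtain x where "x \<in> S G" "(norm x)\<^sup>2 < D G + eps n" using Dless[OF GF eps_pos] by blast
    then show ?thesis using Dd[OF GF] by force
  qed
  have close: "(norm (a - b))\<^sup>2 \<le> 8 * eps k"
    if "a \<in> S (U k)" "b \<in> S (U k)" "(norm a)\<^sup>2 < \<delta> + eps k" "(norm b)\<^sup>2 < \<delta> + eps k" for a b k
  proof -
    have "(norm (a - b))\<^sup>2 \<le> 4 * (2 * eps k)"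
      apply (rule mid_bound[of "S (U k)" a b "D (U k)"])
      using that Sconv[OF UF] Dlow DU[of k] by (auto intro: less_imp_le)
    then show ?thesis by simp
  qed
  have inS: "S G' \<subseteq> S G" if "G \<subseteq> G'" for G G' unfolding S_def using that by auto
  define x where "x n = (SOME a. a \<in> S (U n) \<and> (norm a)\<^sup>2 < \<delta> + eps n)" for n
  have x: "x n \<in> S (U n) \<and> (norm (x n))\<^sup>2 < \<delta> + eps n" for n
    unfolding x_def using approx[OF UF, of n n] by (rule someI2_bex) auto
  have xk: "x n \<in> S (U k) \<and> (norm (x n))\<^sup>2 < \<delta> + eps k" if "k \<le> n" for k n
    using x[of n] inS[OF Umono[OF that]] eps_anti[OF that] by auto
  have "Cauchy x"
  proof (rule CauchyI)
    fix e :: real assume e: "e > 0"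
    obtain M :: nat where M: "8 / e\<^sup>2 < real M" using reals_Archimedean2 by blast
    have "8 * eps M < e\<^sup>2"
    proof -
      have "8 < real M * e\<^sup>2" using M e by (simp add: divide_less_eq)
      also have "\<dots> < real (Suc M) * e\<^sup>2" using e by simp
      finally show ?thesis unfolding eps_def by (simp add: field_simps)
    qed
    show "\<exists>M. \<forall>m\<ge>M. \<forall>n\<ge>M. norm (x m - x n) < e"
    proof (intro exI[of _ M] allI impI)
      fix m n assume mn: "M \<le> m" "M \<le> n"
      have "(norm (x m - x n))\<^sup>2 < e\<^sup>2"
        using close[of "x m" M "x n"] xk[OF mn(1)] xk[OF mn(2)] \<open>8 * eps M < e\<^sup>2\<close> by linarith
      then show "norm (x m - x n) < e" using e by (smt (verit) power_mono norm_ge_zero)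
    qed
  qed
  then obtain xl where xl: "x \<longlonglongrightarrow> xl" using Cauchy_convergent convergent_def by blast
  have sq0: "(\<lambda>n. sqrt (8 * eps n)) \<longlonglongrightarrow> 0"
  proof -
    have "(\<lambda>n. sqrt (8 * eps n)) \<longlonglongrightarrow> sqrt (8 * 0)"
      unfolding eps_def by (intro tendsto_intros LIMSEQ_inverse_real_of_nat)
    then show ?thesis by simp
  qed
  have "xl \<in> K" if K: "K \<in> \<F>" for K
  proof -
    define G where "G n = insert K (U n)" for n
    have GF: "G n \<in> ?Fin" for n unfolding G_def using UF K by auto
    define x' where "x' n = (SOME a. a \<in> S (G n) \<and> (norm a)\<^sup>2 < \<delta> + eps n)" for n
    have x': "x' n \<in> S (G n) \<and> (norm (x' n))\<^sup>2 < \<delta> + eps n" for n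
      unfolding x'_def using approx[OF GF, of n n] by (rule someI2_bex) auto
    have x'U: "x' n \<in> S (U n)" for n using x' inS[of "U n" "G n"] unfolding G_def by auto
    have x'K: "x' n \<in> K" for n using x'[of n] unfolding S_def G_def by auto
    have "(\<lambda>n. x' n - x n) \<longlonglongrightarrow> 0"
    proof (rule Lim_null_comparison[OF _ sq0])
      show "\<forall>\<^sub>F n in sequentially. norm (x' n - x n) \<le> sqrt (8 * eps n)"
      proof (intro always_eventually allI)
        fix n
        have "(norm (x' n - x n))\<^sup>2 \<le> 8 * eps n" using close[of "x' n" n "x n"] x'U x' x by auto
        then show "norm (x' n - x n) \<le> sqrt (8 * eps n)" by (simp add: real_le_rsqrt)
      qed
    qed
    then have "(\<lambda>n. (x' n - x n) + x n) \<longlonglongrightarrow> 0 + xl" using xl by (intro tendsto_add)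
    then have "x' \<longlonglongrightarrow> xl" by simp
    then show ?thesis using closed_sequentially[of K x' xl] x'K cc K by auto
  qed
  then show ?thesis by blast
qed


lemma ball_form_aux:
  fixes a b :: "'a::real_inner"
  shows "- inner a b = (norm (a - b))\<^sup>2 / 4 - (norm ((1/2) *\<^sub>R (a + b)))\<^sup>2"
  unfolding power2_norm_eq_inner
  by (simp add: inner_add_left inner_add_right inner_diff_left inner_diff_right
      inner_commute[of b a] algebra_simps)

lemma ball_form:
  fixes p y c :: "'a::real_inner"
  shows "inner (p - y) (c - p) = (norm (c - y))\<^sup>2 / 4 - (norm (p - (1/2) *\<^sub>R (y + c)))\<^sup>2"
proof -
  have hh: "(1/2::real) *\<^sub>R p + (1/2) *\<^sub>R p = p" by (simp add: scaleR_add_left[symmetric])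
  have e1: "p - (1/2) *\<^sub>R (y + c) = (1/2) *\<^sub>R ((p - y) + (p - c))"
    by (simp add: algebra_simps hh)
  have e2: "c - y = (p - y) - (p - c)" by simp
  have e3: "inner (p - y) (c - p) = - inner (p - y) (p - c)"
    by (metis inner_minus_right minus_diff_eq)
  show ?thesis unfolding e3 e1 e2 by (rule ball_form_aux)
qed

lemma ball_set:
  fixes y c :: "'a::real_inner"
  shows "{p. inner (p - y) (c - p) \<ge> 0} = cball ((1/2) *\<^sub>R (y + c)) (norm (c - y) / 2)"
proof -
  have "0 \<le> inner (p - y) (c - p) \<longleftrightarrow> norm (p - (1/2) *\<^sub>R (y + c)) \<le> norm (c - y) / 2" for p
  proof -
    have "0 \<le> inner (p - y) (c - p) \<longleftrightarrow> (norm (p - (1/2) *\<^sub>R (y + c)))\<^sup>2 \<le> (norm (c - y) / 2)\<^sup>2"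
    proof -
      have "(norm (c - y) / 2)\<^sup>2 = (norm (c - y))\<^sup>2 / 4" by (simp add: power_divide)
      then show ?thesis unfolding ball_form by linarith
    qed
    also have "\<dots> \<longleftrightarrow> norm (p - (1/2) *\<^sub>R (y + c)) \<le> norm (c - y) / 2"
      using power2_le_iff_abs_le[of "norm (c - y) / 2" "norm (p - (1/2) *\<^sub>R (y + c))"] by simp
    finally show ?thesis .
  qed
  note eq = this
  show ?thesis
  proof (rule set_eqI)
    fix p
    show "p \<in> {p. inner (p - y) (c - p) \<ge> 0} \<longleftrightarrow> p \<in> cball ((1/2) *\<^sub>R (y + c)) (norm (c - y) / 2)"
      unfolding mem_Collect_eq mem_cball dist_norm eq[of p]
        norm_minus_commute[of "(1/2) *\<^sub>R (y + c)" p] ..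
  qed
qed

lemma minty_exists:
  fixes A :: "'a::{real_inner,complete_space} \<Rightarrow> 'a set"
  assumes mm: "maximally_monotone A" and g: "\<gamma> > 0"
  shows "\<exists>p. w - p \<in> (\<lambda>u. \<gamma> *\<^sub>R u) ` A p"
proof -
  have mono: "inner (x - y) (u - v) \<ge> 0" if "u \<in> A x" "v \<in> A y" for x y u v
    using mm that unfolding maximally_monotone_def monotone_op_def by blast
  define Gr where "Gr = {(y, v). v \<in> A y}"
  define Bl where "Bl i = {p. inner (p - fst i) ((w - \<gamma> *\<^sub>R snd i) - p) \<ge> 0}" for i
  have "\<Inter>(Bl ` Gr) \<noteq> {}"
  proof (cases "Gr = {}")
    case True
    then show ?thesis by simp
  next
    case False
    then obtain i0 where i0: "i0 \<in> Gr" by auto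
    show ?thesis
    proof (rule fip_hilbert[of "Bl ` Gr" "Bl i0"])
      show "\<forall>K\<in>Bl ` Gr. closed K \<and> convex K" unfolding Bl_def ball_set by auto
      show "Bl i0 \<in> Bl ` Gr" using i0 by simp
      show "bounded (Bl i0)" unfolding Bl_def ball_set by simp
      fix G assume G: "finite G" "G \<subseteq> Bl ` Gr"
      then obtain C where C: "C \<subseteq> Gr" "finite C" "G = Bl ` C" by (meson finite_subset_image)
      have "\<exists>p. \<forall>i\<in>insert i0 C. inner (p - fst i) ((w - \<gamma> *\<^sub>R snd i) - p) \<ge> 0"
      proof (rule finite_minty)
        show "finite (insert i0 C)" using C by simp
        show "insert i0 C \<noteq> {}" by simp
        fix i j assume ij: "i \<in> insert i0 C" "j \<in> insert i0 C"
        then have "i \<in> Gr" "j \<in> Gr" using i0 C by auto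
        then have "inner (fst i - fst j) (snd i - snd j) \<ge> 0"
          unfolding Gr_def using mono by auto
        moreover have "inner (fst i - fst j) ((w - \<gamma> *\<^sub>R snd i) - (w - \<gamma> *\<^sub>R snd j))
            = - \<gamma> * inner (fst i - fst j) (snd i - snd j)"
          by (simp add: inner_diff_right algebra_simps)
        ultimately show "inner (fst i - fst j) ((w - \<gamma> *\<^sub>R snd i) - (w - \<gamma> *\<^sub>R snd j)) \<le> 0"
          using g by (simp add: mult_nonneg_nonneg)
      qed
      then show "\<Inter>(insert (Bl i0) G) \<noteq> {}" unfolding C(3) Bl_def by auto
    qed
  qed
  then obtain p where p: "\<And>i. i \<in> Gr \<Longrightarrow> p \<in> Bl i" by blast
  define u where "u = (1/\<gamma>) *\<^sub>R (w - p)"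
  have uA: "u \<in> A p"
  proof -
    have "inner (p - y) (u - v) \<ge> 0" if "v \<in> A y" for y v
    proof -
      have "inner (p - y) ((w - \<gamma> *\<^sub>R v) - p) \<ge> 0" using p[of "(y, v)"] that
        unfolding Gr_def Bl_def by auto
      moreover have "u - v = (1/\<gamma>) *\<^sub>R ((w - \<gamma> *\<^sub>R v) - p)"
        unfolding u_def using g by (simp add: algebra_simps)
      ultimately show ?thesis using g by simp
    qed
    then show ?thesis using mm unfolding maximally_monotone_def by blast
  qed
  have g1: "\<gamma> * (1/\<gamma>) = 1" using g by simp
  have "\<gamma> *\<^sub>R u = (\<gamma> * (1/\<gamma>)) *\<^sub>R (w - p)" unfolding u_def by (rule scaleR_scaleR)
  then have "\<gamma> *\<^sub>R u = w - p" unfolding g1 scaleR_one .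
  then have "w - p = \<gamma> *\<^sub>R u" by (rule sym)
  then have "w - p \<in> (\<lambda>u. \<gamma> *\<^sub>R u) ` A p" using uA by (rule image_eqI)
  then show ?thesis by (rule exI)
qed

lemma resolvent_ok:
  fixes A :: "'a::{real_inner,complete_space} \<Rightarrow> 'a set"
  assumes mm: "maximally_monotone A" and g: "\<gamma> > 0"
  shows "w - resolvent \<gamma> A w \<in> (\<lambda>u. \<gamma> *\<^sub>R u) ` A (resolvent \<gamma> A w)"
proof -
  have mono: "inner (x - y) (u - v) \<ge> 0" if "u \<in> A x" "v \<in> A y" for x y u v
    using mm that unfolding maximally_monotone_def monotone_op_def by blast
  have uniq: "p = p'" if P: "w - p \<in> (\<lambda>u. \<gamma> *\<^sub>R u) ` A p" "w - p' \<in> (\<lambda>u. \<gamma> *\<^sub>R u) ` A p'" for p p'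
  proof -
    from P(1) obtain u where u: "u \<in> A p" "w - p = \<gamma> *\<^sub>R u" by (auto simp: image_iff)
    from P(2) obtain u' where u': "u' \<in> A p'" "w - p' = \<gamma> *\<^sub>R u'" by (auto simp: image_iff)
    have "inner (p - p') (u - u') \<ge> 0" by (rule mono[OF u(1) u'(1)])
    moreover have "u - u' = (1/\<gamma>) *\<^sub>R (p' - p)"
    proof -
      have "\<gamma> *\<^sub>R (u - u') = p' - p" using u u' by (simp add: algebra_simps)
      moreover have "u - u' = (1/\<gamma>) *\<^sub>R (\<gamma> *\<^sub>R (u - u'))" using g by simp
      ultimately show ?thesis by simp
    qed
    ultimately have "(1/\<gamma>) * inner (p - p') (p' - p) \<ge> 0" by simp
    then have "inner (p - p') (p' - p) \<ge> 0" using g by (simp add: zero_le_divide_iff)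
    moreover have "inner (p - p') (p' - p) = - inner (p - p') (p - p')"
      by (metis inner_minus_right minus_diff_eq)
    ultimately have "inner (p - p') (p - p') \<le> 0" by simp
    then have "inner (p - p') (p - p') = 0" using inner_ge_zero[of "p - p'"] by linarith
    then show ?thesis by simp
  qed
  have "\<exists>!p. w - p \<in> (\<lambda>u. \<gamma> *\<^sub>R u) ` A p" using minty_exists[OF mm g] uniq by blast
  then show ?thesis unfolding resolvent_def by (rule theI')
qed

lemma key_identity:
  fixes z X Y zs xs bY b0 bm bx c0 cx y0 :: "'a::real_inner" and g :: real
  shows "(norm (z + Y - X - zs))\<^sup>2 + 2*g*inner (bY - b0) (xs - Y) + (norm (z + Y - X - z))\<^sup>2
     + 2 * inner (X - xs) ((z - X) - (zs - xs))
     + 2 * inner (Y - xs) ((2 *\<^sub>R X - z - (2*g) *\<^sub>R b0 + g *\<^sub>R bm - g *\<^sub>R c0 - Y) - (xs - zs - g *\<^sub>R bx - g *\<^sub>R cx))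
     + 2*g*inner (Y - xs) (bY - bx)
   = (norm (z - zs))\<^sup>2 + 2*g*inner (b0 - bm) (xs - y0) + 2*g*inner (b0 - bm) (y0 - Y) + 2*g*inner (c0 - cx) (xs - Y)"
  unfolding power2_norm_eq_inner
  by (simp add: inner_add_left inner_add_right inner_diff_left inner_diff_right inner_commute algebra_simps)

theorem lemma3p1:
  fixes A1 A2 :: "'a::{real_inner, complete_space} \<Rightarrow> 'a set"
    and B C :: "'a \<Rightarrow> 'a"
    and L \<beta> \<gamma> :: real
    and x y z :: "int \<Rightarrow> 'a"
    and xs zs :: 'a
  assumes "maximally_monotone A1" and "maximally_monotone A2"
    and "monotone_single B" and "L > 0" and "lipschitz_op L B"
    and "\<beta> > 0" and "cocoercive \<beta> C"
    and "\<gamma> > 0"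
    and x_rec: "\<And>n. n \<ge> 0 \<Longrightarrow> x (n + 1) = resolvent \<gamma> A1 (z n)"
    and y_rec: "\<And>n. n \<ge> 0 \<Longrightarrow> y (n + 1) = resolvent \<gamma> A2
              (2 *\<^sub>R x (n + 1) - z n - (2 * \<gamma>) *\<^sub>R B (y n) + \<gamma> *\<^sub>R B (y (n - 1)) - \<gamma> *\<^sub>R C (y n))"
    and z_rec: "\<And>n. n \<ge> 0 \<Longrightarrow> z (n + 1) = z n + y (n + 1) - x (n + 1)"
    and sol1: "zs - xs \<in> (\<lambda>u. \<gamma> *\<^sub>R u) ` A1 xs"
    and sol2: "xs - zs \<in> (\<lambda>u. \<gamma> *\<^sub>R u) ` {a + B xs + C xs | a. a \<in> A2 xs}"
  shows "\<forall>n::int. n \<ge> 0 \<longrightarrow>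
    (norm (z (n + 1) - zs))\<^sup>2 + 2 * \<gamma> * inner (B (y (n + 1)) - B (y n)) (xs - y (n + 1))
      + (norm (z (n + 1) - z n))\<^sup>2
    \<le> (norm (z n - zs))\<^sup>2 + 2 * \<gamma> * inner (B (y n) - B (y (n - 1))) (xs - y n)
      + 2 * \<gamma> * inner (B (y n) - B (y (n - 1))) (y n - y (n + 1))
      + 2 * \<gamma> * inner (C (y n) - C xs) (xs - y (n + 1))"
proof (intro allI impI)
  fix n :: int assume n: "n \<ge> 0"
  have mono1: "inner (a - b) (u - v) \<ge> 0" if "u \<in> A1 a" "v \<in> A1 b" for a b u v
    using assms(1) that unfolding maximally_monotone_def monotone_op_def by blast
  have mono2: "inner (a - b) (u - v) \<ge> 0" if "u \<in> A2 a" "v \<in> A2 b" for a b u v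
    using assms(2) that unfolding maximally_monotone_def monotone_op_def by blast
  define w2 where "w2 = 2 *\<^sub>R x (n + 1) - z n - (2 * \<gamma>) *\<^sub>R B (y n) + \<gamma> *\<^sub>R B (y (n - 1)) - \<gamma> *\<^sub>R C (y n)"
  have "z n - x (n + 1) \<in> (\<lambda>u. \<gamma> *\<^sub>R u) ` A1 (x (n + 1))"
    unfolding x_rec[OF n] by (rule resolvent_ok[OF assms(1) assms(8)])
  then obtain a1 where a1: "a1 \<in> A1 (x (n + 1))" "z n - x (n + 1) = \<gamma> *\<^sub>R a1" by auto
  have "w2 - y (n + 1) \<in> (\<lambda>u. \<gamma> *\<^sub>R u) ` A2 (y (n + 1))"
    unfolding y_rec[OF n] w2_def by (rule resolvent_ok[OF assms(2) assms(8)])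
  then obtain a2 where a2: "a2 \<in> A2 (y (n + 1))" "w2 - y (n + 1) = \<gamma> *\<^sub>R a2" by auto
  obtain a1s where a1s: "a1s \<in> A1 xs" "zs - xs = \<gamma> *\<^sub>R a1s" using sol1 by auto
  obtain a2s where a2s: "a2s \<in> A2 xs" "xs - zs = \<gamma> *\<^sub>R (a2s + B xs + C xs)" using sol2 by auto
  have i1: "inner (x (n + 1) - xs) ((z n - x (n + 1)) - (zs - xs)) \<ge> 0"
  proof -
    have "inner (x (n + 1) - xs) (a1 - a1s) \<ge> 0" by (rule mono1[OF a1(1) a1s(1)])
    moreover have "(z n - x (n + 1)) - (zs - xs) = \<gamma> *\<^sub>R (a1 - a1s)"
      unfolding a1(2) a1s(2) by (simp add: scaleR_diff_right)
    ultimately show ?thesis using assms(8) by simp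
  qed
  have i2: "inner (y (n + 1) - xs) ((w2 - y (n + 1)) - (xs - zs - \<gamma> *\<^sub>R B xs - \<gamma> *\<^sub>R C xs)) \<ge> 0"
  proof -
    have "inner (y (n + 1) - xs) (a2 - a2s) \<ge> 0" by (rule mono2[OF a2(1) a2s(1)])
    moreover have "xs - zs - \<gamma> *\<^sub>R B xs - \<gamma> *\<^sub>R C xs = \<gamma> *\<^sub>R a2s"
      unfolding a2s(2) by (simp add: scaleR_add_right)
    moreover have "(w2 - y (n + 1)) - \<gamma> *\<^sub>R a2s = \<gamma> *\<^sub>R (a2 - a2s)"
      unfolding a2(2) by (simp add: scaleR_diff_right)
    ultimately show ?thesis using assms(8) by simp
  qed
  have i3: "inner (y (n + 1) - xs) (B (y (n + 1)) - B xs) \<ge> 0"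
    using assms(3) unfolding monotone_single_def by blast
  have zz: "z (n + 1) = z n + y (n + 1) - x (n + 1)" by (rule z_rec[OF n])
  have "2 * \<gamma> * inner (y (n + 1) - xs) (B (y (n + 1)) - B xs) \<ge> 0"
    using i3 assms(8) by simp
  then show "(norm (z (n + 1) - zs))\<^sup>2 + 2 * \<gamma> * inner (B (y (n + 1)) - B (y n)) (xs - y (n + 1))
      + (norm (z (n + 1) - z n))\<^sup>2
    \<le> (norm (z n - zs))\<^sup>2 + 2 * \<gamma> * inner (B (y n) - B (y (n - 1))) (xs - y n)
      + 2 * \<gamma> * inner (B (y n) - B (y (n - 1))) (y n - y (n + 1))
      + 2 * \<gamma> * inner (C (y n) - C xs) (xs - y (n + 1))"
    using key_identity[of "z n" "y (n + 1)" "x (n + 1)" zs \<gamma> "B (y (n + 1))" "B (y n)" xs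
        "B (y (n - 1))" "C (y n)" "B xs" "C xs" "y n"] i1 i2
    unfolding zz w2_def by linarith
qed

end
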